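(* Let $(S,K,I)$ be a split graph, and let $u,v\in I$ be distinct vertices such that $uxv$ is a path in $A_4(S)$ for some $x\in K$. Then there is a path $P$ in $A_4(S)$ between $u$ and $v$ with $V(P)\subseteq I$ and $|V(P)|\le 4$.
   Context: All graphs are finite and simple. A split graph is a graph $S$ whose vertex set is a disjoint union $V(S)=K\,\dot\cup\,I$ with $K$ a clique and $I$ an independent set; $(K,I)$ is called a bipartition of $S$, and $(S,K,I)$ denotes $S$ together with this fixed bipartition. A 2-switch in a graph $G$ is performed on four distinct vertices $a,b,c,d$ with $ab,cd\in E(G)$ and $ac,bd\notin E(G)$: it deletes $ab,cd$ and adds $ac,bd$; $a,b,c,d$ are said to participate in it. $A_4(G)$ is the graph with vertex set $V(G)$ in which distinct $u,v$ are adjacent iff some 2-switch on $G$ has both $u$ and $v$ among its participating vertices. *)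

theory Defs
  imports Main
begin

definition simple_graph :: "'a set \<Rightarrow> 'a set set \<Rightarrow> bool" where
  "simple_graph V E \<longleftrightarrow> finite V \<and>
     (\<forall>e\<in>E. \<exists>a b. e = {a, b} \<and> a \<noteq> b \<and> a \<in> V \<and> b \<in> V)"

definition split_graph :: "'a set \<Rightarrow> 'a set set \<Rightarrow> 'a set \<Rightarrow> 'a set \<Rightarrow> bool" where
  "split_graph V E K I \<longleftrightarrow> simple_graph V E \<and> K \<union> I = V \<and> K \<inter> I = {} \<and>
     (\<forall>a\<in>K. \<forall>b\<in>K. a \<noteq> b \<longrightarrow> {a, b} \<in> E) \<and>
     (\<forall>a\<in>I. \<forall>b\<in>I. {a, b} \<notin> E)"

definition two_switch :: "'a set \<Rightarrow> 'a set set \<Rightarrow> 'a \<Rightarrow> 'a \<Rightarrow> 'a \<Rightarrow> 'a \<Rightarrow> bool" where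
  "two_switch V E a b c d \<longleftrightarrow> distinct [a, b, c, d] \<and> {a, b, c, d} \<subseteq> V \<and>
     {a, b} \<in> E \<and> {c, d} \<in> E \<and> {a, c} \<notin> E \<and> {b, d} \<notin> E"

definition A4_adj :: "'a set \<Rightarrow> 'a set set \<Rightarrow> 'a \<Rightarrow> 'a \<Rightarrow> bool" where
  "A4_adj V E u v \<longleftrightarrow> u \<noteq> v \<and>
     (\<exists>a b c d. two_switch V E a b c d \<and> u \<in> {a, b, c, d} \<and> v \<in> {a, b, c, d})"

definition is_path :: "('a \<Rightarrow> 'a \<Rightarrow> bool) \<Rightarrow> 'a list \<Rightarrow> 'a \<Rightarrow> 'a \<Rightarrow> bool" where
  "is_path R ps u v \<longleftrightarrow> ps \<noteq> [] \<and> hd ps = u \<and> last ps = v \<and> distinct ps \<and>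
     (\<forall>i. Suc i < length ps \<longrightarrow> R (ps ! i) (ps ! Suc i))"

end

theory Submission
  imports Defs
begin

lemma path2: "R a b \<Longrightarrow> a \<noteq> b \<Longrightarrow> is_path R [a, b] a b"
  by (auto simp: is_path_def less_Suc_eq)

lemma path3: "R a b \<Longrightarrow> R b c \<Longrightarrow> distinct [a, b, c] \<Longrightarrow> is_path R [a, b, c] a c"
  unfolding is_path_def
  apply (intro conjI allI impI)
      apply simp_all
  subgoal for i by (cases i) (auto simp: less_Suc_eq)
  done

lemma path4: "R a b \<Longrightarrow> R b c \<Longrightarrow> R c d \<Longrightarrow> distinct [a, b, c, d] \<Longrightarrow> is_path R [a, b, c, d] a d"
  unfolding is_path_def
  apply (intro conjI allI impI)
      apply simp_all
  subgoal for i by (cases i; cases "i - 1") (auto simp: less_Suc_eq)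
  done

lemma walk3:
  assumes irr: "\<And>x y. R x y \<Longrightarrow> x \<noteq> y"
    and "a \<noteq> d" "a = b \<or> R a b" "b = c \<or> R b c" "c = d \<or> R c d"
    and "a \<in> I" "b \<in> I" "c \<in> I" "d \<in> I"
  shows "\<exists>P. is_path R P a d \<and> set P \<subseteq> I \<and> length P \<le> 4"
proof -
  have g1: "\<exists>P. is_path R P a' d' \<and> set P \<subseteq> I \<and> length P \<le> 4"
    if "R a' d'" "a' \<in> I" "d' \<in> I" for a' d'
    using path2[of R a' d'] that irr by (intro exI[of _ "[a', d']"]) auto
  have g2: "\<exists>P. is_path R P a' d' \<and> set P \<subseteq> I \<and> length P \<le> 4"
    if "R a' b'" "R b' d'" "a' \<noteq> d'" "a' \<in> I" "b' \<in> I" "d' \<in> I" for a' b' d'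
    using path3[of R a' b' d'] that irr[of a' b'] irr[of b' d'] by (intro exI[of _ "[a', b', d']"]) auto
  have g3: "\<exists>P. is_path R P a d \<and> set P \<subseteq> I \<and> length P \<le> 4"
    if "R a b" "R b c" "R c d"
  proof (cases "a = c")
    case True thus ?thesis using g1 that assms by auto
  next
    case f1: False
    show ?thesis
    proof (cases "b = d")
      case True thus ?thesis using g1 that assms by auto
    next
      case False
      thus ?thesis using f1 path4[of R a b c d] that assms irr[of a b] irr[of b c] irr[of c d]
        by (intro exI[of _ "[a, b, c, d]"]) auto
    qed
  qed
  show ?thesis
    using assms g1 g2 g3 by metis
qed


definition sw :: "'a set set \<Rightarrow> 'a set \<Rightarrow> 'a set \<Rightarrow> 'a \<Rightarrow> 'a \<Rightarrow> 'a \<Rightarrow> 'a \<Rightarrow> bool" where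
  "sw E K I k1 i1 k2 i2 \<longleftrightarrow> k1 \<in> K \<and> k2 \<in> K \<and> i1 \<in> I \<and> i2 \<in> I \<and>
     {k1, i1} \<in> E \<and> {k2, i2} \<in> E \<and> {k1, i2} \<notin> E \<and> {k2, i1} \<notin> E"

lemma sw_adj:
  assumes sg: "split_graph V E K I" and s: "sw E K I k1 i1 k2 i2"
  shows "A4_adj V E i1 i2"
proof -
  have ts: "two_switch V E k1 i1 i2 k2"
    using sg s unfolding split_graph_def sw_def two_switch_def by (auto simp: insert_commute)
  moreover have "i1 \<noteq> i2" using s unfolding sw_def by auto
  ultimately show ?thesis unfolding A4_adj_def by blast
qed

lemma adj_sw:
  assumes sg: "split_graph V E K I" and "u \<in> I" "w \<in> K" and adj: "A4_adj V E u w"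
  shows "\<exists>k p q. sw E K I w p k q \<and> (u = p \<or> u = q)"
proof -
  obtain a b c d where ts: "two_switch V E a b c d" and uin: "u \<in> {a,b,c,d}" and win: "w \<in> {a,b,c,d}"
    using adj unfolding A4_adj_def by blast
  have KI: "K \<union> I = V" "K \<inter> I = {}" and cl: "\<forall>a\<in>K. \<forall>b\<in>K. a \<noteq> b \<longrightarrow> {a, b} \<in> E"
    and ind: "\<forall>a\<in>I. \<forall>b\<in>I. {a, b} \<notin> E"
    using sg unfolding split_graph_def by auto
  have d: "distinct [a,b,c,d]" "{a,b,c,d} \<subseteq> V" "{a, b} \<in> E" "{c, d} \<in> E" "{a, c} \<notin> E" "{b, d} \<notin> E"
    using ts unfolding two_switch_def by auto
  have "sw E K I a b d c \<or> sw E K I b a c d"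
  proof (cases "a \<in> K")
    case True
    then have "c \<in> I" using d KI cl by auto
    then have "d \<in> K" using d KI ind by auto
    then have "b \<in> I" using d KI cl by auto
    then have "sw E K I a b d c" using \<open>a \<in> K\<close> \<open>c \<in> I\<close> \<open>d \<in> K\<close> d
      unfolding sw_def by (auto simp: insert_commute)
    then show ?thesis ..
  next
    case False
    then have "a \<in> I" using d KI by auto
    then have "b \<in> K" using d KI ind by auto
    then have "d \<in> I" using d KI cl by auto
    then have "c \<in> K" using d KI ind by auto
    then have "sw E K I b a c d" using \<open>a \<in> I\<close> \<open>b \<in> K\<close> \<open>d \<in> I\<close> d
      unfolding sw_def by (auto simp: insert_commute)
    then show ?thesis ..
  qed
  then show ?thesis
  proof
    assume s: "sw E K I a b d c"
    have "a \<in> K" "d \<in> K" "b \<in> I" "c \<in> I" using s unfolding sw_def by auto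
    then have "w = a \<or> w = d" "u = b \<or> u = c" using uin win \<open>u \<in> I\<close> \<open>w \<in> K\<close> KI by auto
    moreover have "sw E K I d c a b" using s unfolding sw_def by auto
    ultimately show ?thesis using s by blast
  next
    assume s: "sw E K I b a c d"
    have "b \<in> K" "c \<in> K" "a \<in> I" "d \<in> I" using s unfolding sw_def by auto
    then have "w = b \<or> w = c" "u = a \<or> u = d" using uin win \<open>u \<in> I\<close> \<open>w \<in> K\<close> KI by auto
    moreover have "sw E K I c d b a" using s unfolding sw_def by auto
    ultimately show ?thesis using s by blast
  qed
qed

theorem lemma2p2:
  fixes V K I :: "'a set" and E :: "'a set set"
  assumes "split_graph V E K I"
    and "u \<in> I" and "v \<in> I" and "u \<noteq> v"
    and "x \<in> K" and "is_path (A4_adj V E) [u, x, v] u v"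
  shows "\<exists>P. is_path (A4_adj V E) P u v \<and> set P \<subseteq> I \<and> length P \<le> 4"
proof -
  note sg = assms(1)
  have a1: "A4_adj V E u x" and a2: "A4_adj V E x v"
    using assms(6) unfolding is_path_def by (auto dest: spec[of _ 0] spec[of _ 1])
  have a2': "A4_adj V E v x" using a2 unfolding A4_adj_def by blast
  obtain z p q where s1: "sw E K I x p z q" and up: "u = p \<or> u = q"
    using adj_sw[OF sg assms(2) assms(5) a1] by blast
  obtain y r s where s2: "sw E K I x r y s" and vr: "v = r \<or> v = s"
    using adj_sw[OF sg assms(3) assms(5) a2'] by blast
  let ?R = "A4_adj V E"
  have irr: "\<And>a b. ?R a b \<Longrightarrow> a \<noteq> b" unfolding A4_adj_def by blast
  have sym: "\<And>a b. ?R a b \<Longrightarrow> ?R b a" unfolding A4_adj_def by blast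
  have I4: "p \<in> I" "q \<in> I" "r \<in> I" "s \<in> I" using s1 s2 unfolding sw_def by auto
  have pq: "?R p q" "?R q p" using sw_adj[OF sg s1] sym by auto
  have rs: "?R r s" "?R s r" using sw_adj[OF sg s2] sym by auto
  have ua: "u = \<alpha> \<or> ?R u \<alpha>" if "\<alpha> \<in> {p, q}" for \<alpha> using that up pq by auto
  have bv: "\<beta> = v \<or> ?R \<beta> v" if "\<beta> \<in> {r, s}" for \<beta> using that vr rs by auto
  have bridge: "\<exists>\<alpha>\<in>{p,q}. \<exists>\<beta>\<in>{r,s}. ?R \<alpha> \<beta>"
  proof (cases "{y, p} \<in> E")
    case False
    have "sw E K I x p y s" using s1 s2 False unfolding sw_def by auto
    then show ?thesis using sw_adj[OF sg] by blast
  next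
    case yp: True
    show ?thesis
    proof (cases "{z, r} \<in> E")
      case False
      have "sw E K I z q x r" using s1 s2 False unfolding sw_def by (auto simp: insert_commute)
      then show ?thesis using sw_adj[OF sg] by blast
    next
      case True
      have "sw E K I y p z r" using s1 s2 True yp unfolding sw_def by (auto simp: insert_commute)
      then show ?thesis using sw_adj[OF sg] by blast
    qed
  qed
  then obtain \<alpha> \<beta> where ab: "\<alpha> \<in> {p,q}" "\<beta> \<in> {r,s}" "?R \<alpha> \<beta>" by blast
  show ?thesis
    apply (rule walk3[of ?R u v \<alpha> \<beta> I])
    using irr assms(2,3,4) ua[OF ab(1)] bv[OF ab(2)] ab I4 by auto
qed

end
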